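(* Let $G$ be a Tanner graph representing the binary code $\mathcal{C}$, and let $p$ be a lift-realizable pseudocodeword of $G$. Then $p$ can be written as $p=c^{(1)}+c^{(2)}+\cdots+c^{(k)}+r$, where $c^{(1)},\dots,c^{(k)}\in\mathcal{C}$ are (not necessarily distinct) codewords and $r$ is a nonnegative integer vector such that no nonzero codeword $c\in\mathcal{C}$ has $\operatorname{supp}(c)\subseteq\operatorname{supp}(r)$; moreover, either $r$ is the all-zeros vector or every entry of $r$ is $0$ or even.
   Context: A Tanner graph $G$ is a finite bipartite graph with variable nodes $v_1,\dots,v_n$ and check nodes; its code $\mathcal{C}$ consists of all $x\in\{0,1\}^n$ with every check node having an even number of neighbours $v_i$ with $x_i=1$. A degree-$\ell$ lift replaces each node by $\ell$ copies and each edge by a perfect matching between copy-sets; a lift-realizable pseudocodeword $p\in\mathbb{Z}_{\ge0}^n$ is obtained from a codeword of the code of a finite lift by letting $p_i$ be the number of copies of $v_i$ assigned 1. $\operatorname{supp}(x)=\{i:x_i\neq0\}$. *)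

theory Defs
  imports Main
begin

text \<open>A Tanner graph with variable nodes 0..<n, check nodes 0..<m and edge set E;
  a pair (i,j) in E means variable node i is adjacent to check node j.
  Vectors in Z_{>=0}^n are functions nat => nat vanishing outside {..<n}.\<close>

definition tanner_graph :: "nat \<Rightarrow> nat \<Rightarrow> (nat \<times> nat) set \<Rightarrow> bool" where
  "tanner_graph n m E \<longleftrightarrow> E \<subseteq> {..<n} \<times> {..<m}"

definition tanner_code :: "nat \<Rightarrow> nat \<Rightarrow> (nat \<times> nat) set \<Rightarrow> (nat \<Rightarrow> nat) set" where
  "tanner_code n m E = {x. (\<forall>i. x i \<in> {0,1}) \<and> (\<forall>i\<ge>n. x i = 0) \<and>
      (\<forall>j<m. even (card {i. i < n \<and> (i,j) \<in> E \<and> x i = 1}))}"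

text \<open>A degree-l lift: variable node i becomes copies (i,a), a < l; check node j becomes
  copies (j,b), b < l; edge e = (i,j) becomes the perfect matching (i,a) -- (j, \<pi> e a),
  where \<pi> e is a bijection of {..<l}.\<close>
definition lift_codeword ::
  "nat \<Rightarrow> nat \<Rightarrow> (nat \<times> nat) set \<Rightarrow> nat \<Rightarrow> (nat \<times> nat \<Rightarrow> nat \<Rightarrow> nat) \<Rightarrow> (nat \<times> nat \<Rightarrow> bool) \<Rightarrow> bool" where
  "lift_codeword n m E l \<pi> y \<longleftrightarrow>
     (\<forall>j<m. \<forall>b<l. even (card {(i,a). i < n \<and> a < l \<and> (i,j) \<in> E \<and> \<pi> (i,j) a = b \<and> y (i,a)}))"

definition lift_realizable_pseudocodeword ::
  "nat \<Rightarrow> nat \<Rightarrow> (nat \<times> nat) set \<Rightarrow> (nat \<Rightarrow> nat) \<Rightarrow> bool" where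
  "lift_realizable_pseudocodeword n m E p \<longleftrightarrow>
     (\<exists>l \<pi> y. l \<ge> 1 \<and> (\<forall>e\<in>E. bij_betw (\<pi> e) {..<l} {..<l}) \<and>
        lift_codeword n m E l \<pi> y \<and>
        p = (\<lambda>i. if i < n then card {a. a < l \<and> y (i,a)} else 0))"

definition supp :: "(nat \<Rightarrow> nat) \<Rightarrow> nat set" where
  "supp x = {i. x i \<noteq> 0}"

end

theory Submission
  imports Defs
begin

lemma parity_sum:
  fixes r :: "nat \<Rightarrow> nat"
  assumes "finite N"
  shows "even (sum r N) = even (card {i\<in>N. odd (r i)})"
  using assms
proof (induction N rule: finite_induct)
  case empty
  then show ?case by simp
next
  case (insert x F)
  have fin: "finite {i\<in>F. odd (r i)}" using insert by simp
  show ?case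
  proof (cases "odd (r x)")
    case True
    then have "{i\<in>insert x F. odd (r i)} = insert x {i\<in>F. odd (r i)}" by auto
    moreover have "x \<notin> {i\<in>F. odd (r i)}" using insert by simp
    ultimately show ?thesis using insert True fin by simp
  next
    case False
    then have "{i\<in>insert x F. odd (r i)} = {i\<in>F. odd (r i)}" by auto
    then show ?thesis using insert False by simp
  qed
qed

lemma lift_parity:
  assumes "lift_realizable_pseudocodeword n m E p"
  shows "(\<forall>i\<ge>n. p i = 0) \<and> (\<forall>j<m. even (\<Sum>i\<in>{i. i<n \<and> (i,j)\<in>E}. p i))"
proof -
  obtain l \<pi> y where l: "l \<ge> 1" and bij: "\<forall>e\<in>E. bij_betw (\<pi> e) {..<l} {..<l}"
    and lc: "lift_codeword n m E l \<pi> y"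
    and pdef: "p = (\<lambda>i. if i < n then card {a. a < l \<and> y (i,a)} else 0)"
    using assms unfolding lift_realizable_pseudocodeword_def by blast
  have "even (\<Sum>i\<in>{i. i<n \<and> (i,j)\<in>E}. p i)" if j: "j < m" for j
  proof -
    define N where "N = {i. i<n \<and> (i,j)\<in>E}"
    define S where "S = {(i,a). i<n \<and> a<l \<and> (i,j)\<in>E \<and> y(i,a)}"
    define f where "f = (\<lambda>(i,a). \<pi> (i,j) a)"
    have finN: "finite N" unfolding N_def by simp
    have finS: "finite S"
      by (rule finite_subset[of _ "{..<n} \<times> {..<l}"]) (auto simp: S_def)
    have img: "f ` S \<subseteq> {..<l}"
    proof
      fix z assume "z \<in> f ` S"
      then obtain i a where ia: "(i,a) \<in> S" "z = \<pi> (i,j) a" unfolding f_def by auto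
      then have "(i,j) \<in> E" "a < l" unfolding S_def by auto
      then show "z \<in> {..<l}" using bij ia(2) by (auto dest: bij_betw_apply)
    qed
    have "(\<Sum>b\<in>{..<l}. sum (\<lambda>_. 1::nat) {x. x \<in> S \<and> f x = b}) = sum (\<lambda>_. 1) S"
      by (rule sum.group[OF finS _ img]) simp
    then have cS: "card S = (\<Sum>b<l. card {x. x \<in> S \<and> f x = b})" by simp
    have "even (card {x. x \<in> S \<and> f x = b})" if b: "b < l" for b
    proof -
      have "{x. x \<in> S \<and> f x = b} = {(i,a). i < n \<and> a < l \<and> (i,j) \<in> E \<and> \<pi> (i,j) a = b \<and> y (i,a)}"
        unfolding S_def f_def by auto
      then show ?thesis using lc j b unfolding lift_codeword_def by simp
    qed
    then have evS: "even (card S)" unfolding cS by (auto intro: dvd_sum)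
    have "S = Sigma N (\<lambda>i. {a. a<l \<and> y(i,a)})" unfolding S_def N_def by auto
    then have "card S = (\<Sum>i\<in>N. card {a. a<l \<and> y(i,a)})" using finN by simp
    also have "\<dots> = (\<Sum>i\<in>N. p i)" unfolding pdef N_def by (rule sum.cong) auto
    finally show ?thesis using evS unfolding N_def by simp
  qed
  moreover have "\<forall>i\<ge>n. p i = 0" unfolding pdef by simp
  ultimately show ?thesis by blast
qed

definition Qp where
  "Qp n m E r \<longleftrightarrow> (\<forall>i\<ge>n. r i = 0) \<and> (\<forall>j<m. even (\<Sum>i\<in>{i. i<n \<and> (i,j)\<in>E}. r i))"

lemma decomp:
  fixes r :: "nat \<Rightarrow> nat"
  assumes "Qp n m E r"
  shows "\<exists>k (c :: nat \<Rightarrow> nat \<Rightarrow> nat) r'.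
           (\<forall>t<k. c t \<in> tanner_code n m E) \<and>
           (\<forall>i. r i = (\<Sum>t<k. c t i) + r' i) \<and> Qp n m E r' \<and>
           (\<forall>cw \<in> tanner_code n m E. cw \<noteq> (\<lambda>_. 0) \<longrightarrow> \<not> supp cw \<subseteq> supp r')"
  using assms
proof (induction "\<Sum>i<n. r i" arbitrary: r rule: less_induct)
  case less
  show ?case
  proof (cases "\<exists>cw \<in> tanner_code n m E. cw \<noteq> (\<lambda>_. 0) \<and> supp cw \<subseteq> supp r")
    case False
    then show ?thesis using less.prems
      by (intro exI[of _ 0] exI[of _ "\<lambda>_ _. 0"] exI[of _ r]) auto
  next
    case True
    then obtain c where c: "c \<in> tanner_code n m E" "c \<noteq> (\<lambda>_. 0)" "supp c \<subseteq> supp r" by blast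
    have c01: "\<And>i. c i = 0 \<or> c i = 1" and cn: "\<And>i. i \<ge> n \<Longrightarrow> c i = 0"
      and cpar: "\<And>j. j < m \<Longrightarrow> even (card {i. i < n \<and> (i,j) \<in> E \<and> c i = 1})"
      using c(1) unfolding tanner_code_def by auto
    have cle: "c i \<le> r i" for i
    proof -
      have "c i \<noteq> 0 \<Longrightarrow> r i \<noteq> 0" using c(3) unfolding supp_def by blast
      then show ?thesis using c01[of i] by linarith
    qed
    define r1 where "r1 = (\<lambda>i. r i - c i)"
    have Q1: "Qp n m E r1"
      unfolding Qp_def
    proof (intro conjI allI impI)
      fix i assume "n \<le> i" then show "r1 i = 0" using less.prems unfolding r1_def Qp_def by simp
    next
      fix j assume j: "j < m"
      define N where "N = {i. i<n \<and> (i,j)\<in>E}"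
      have finN: "finite N" unfolding N_def by simp
      have "sum r1 N = sum r N - sum c N" unfolding r1_def
        by (rule sum_subtractf_nat) (simp add: cle)
      moreover have "sum c N \<le> sum r N" by (rule sum_mono) (simp add: cle)
      moreover have "even (sum r N)" using less.prems j unfolding Qp_def N_def by simp
      moreover have "even (sum c N)"
      proof -
        have "{i\<in>N. odd (c i)} = {i. i < n \<and> (i,j) \<in> E \<and> c i = 1}"
        proof -
          have "odd (c i) \<longleftrightarrow> c i = 1" for i using c01[of i] by auto
          then show ?thesis unfolding N_def by auto
        qed
        then show ?thesis using parity_sum[OF finN, of c] cpar[OF j] by simp
      qed
      ultimately show "even (\<Sum>i\<in>{i. i<n \<and> (i,j)\<in>E}. r1 i)" unfolding N_def by auto
    qed
    obtain i0 where i0: "c i0 \<noteq> 0" using c(2) by auto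
    then have i0n: "i0 < n" using cn by (meson not_le)
    have lt: "(\<Sum>i<n. r1 i) < (\<Sum>i<n. r i)"
    proof (rule sum_strict_mono_ex1)
      show "\<forall>x\<in>{..<n}. r1 x \<le> r x" unfolding r1_def by simp
      show "\<exists>a\<in>{..<n}. r1 a < r a"
        using i0 i0n cle[of i0] unfolding r1_def by (intro bexI[of _ i0]) auto
    qed simp
    obtain k :: nat and c' :: "nat \<Rightarrow> nat \<Rightarrow> nat" and r' :: "nat \<Rightarrow> nat" where IH: "\<forall>t<k. c' t \<in> tanner_code n m E"
      "\<forall>i. r1 i = (\<Sum>t<k. c' t i) + r' i" "Qp n m E r'"
      "\<forall>cw \<in> tanner_code n m E. cw \<noteq> (\<lambda>_. 0) \<longrightarrow> \<not> supp cw \<subseteq> supp r'"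
      using less.hyps[OF lt Q1] by blast
    define c'' where "c'' = (\<lambda>t. if t = k then c else c' t)"
    have "\<forall>t<Suc k. c'' t \<in> tanner_code n m E" using IH(1) c(1) unfolding c''_def by auto
    moreover have "\<forall>i. r i = (\<Sum>t<Suc k. c'' t i) + r' i"
    proof
      fix i
      have "(\<Sum>t<k. c'' t i) = (\<Sum>t<k. c' t i)" unfolding c''_def by (rule sum.cong) auto
      then have "(\<Sum>t<Suc k. c'' t i) = (\<Sum>t<k. c' t i) + c i" by (simp add: c''_def)
      then show "r i = (\<Sum>t<Suc k. c'' t i) + r' i"
        using IH(2) cle[of i] unfolding r1_def by (metis add.commute add.left_commute le_add_diff_inverse)
    qed
    ultimately show ?thesis using IH(3,4) by blast
  qed
qed

theorem lemma5:
  fixes n m :: nat and E :: "(nat \<times> nat) set" and p :: "nat \<Rightarrow> nat"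
  assumes "tanner_graph n m E"
    and "lift_realizable_pseudocodeword n m E p"
  shows "\<exists>k (c :: nat \<Rightarrow> nat \<Rightarrow> nat) (r :: nat \<Rightarrow> nat).
           (\<forall>t<k. c t \<in> tanner_code n m E) \<and>
           (\<forall>i. p i = (\<Sum>t<k. c t i) + r i) \<and>
           (\<forall>i\<ge>n. r i = 0) \<and>
           (\<forall>cw \<in> tanner_code n m E. cw \<noteq> (\<lambda>_. 0) \<longrightarrow> \<not> supp cw \<subseteq> supp r) \<and>
           (r = (\<lambda>_. 0) \<or> (\<forall>i<n. r i = 0 \<or> even (r i)))"
proof -
  have "Qp n m E p" using lift_parity[OF assms(2)] unfolding Qp_def by blast
  then obtain k :: nat and c :: "nat \<Rightarrow> nat \<Rightarrow> nat" and r :: "nat \<Rightarrow> nat" where D: "\<forall>t<k. c t \<in> tanner_code n m E"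
      "\<forall>i. p i = (\<Sum>t<k. c t i) + r i" "Qp n m E r"
      "\<forall>cw \<in> tanner_code n m E. cw \<noteq> (\<lambda>_. 0) \<longrightarrow> \<not> supp cw \<subseteq> supp r"
    using decomp[OF \<open>Qp n m E p\<close>] by blast
  have rn: "\<forall>i\<ge>n. r i = 0" using D(3) unfolding Qp_def by simp
  define x where "x = (\<lambda>i. r i mod 2)"
  have xc: "x \<in> tanner_code n m E"
    unfolding tanner_code_def
  proof (intro CollectI conjI allI impI)
    fix i show "x i \<in> {0,1}" unfolding x_def by auto
  next
    fix i assume "n \<le> i" then show "x i = 0" using rn unfolding x_def by simp
  next
    fix j assume j: "j < m"
    define N where "N = {i. i<n \<and> (i,j)\<in>E}"
    have finN: "finite N" unfolding N_def by simp
    have "even (sum r N)" using D(3) j unfolding Qp_def N_def by simp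
    moreover have "{i\<in>N. odd (r i)} = {i. i < n \<and> (i,j) \<in> E \<and> x i = 1}"
      unfolding N_def x_def by (auto simp: odd_iff_mod_2_eq_one)
    ultimately show "even (card {i. i < n \<and> (i,j) \<in> E \<and> x i = 1})"
      using parity_sum[OF finN, of r] by simp
  qed
  have "supp x \<subseteq> supp r" unfolding supp_def x_def by auto
  then have "x = (\<lambda>_. 0)" using D(4) xc by blast
  then have "\<forall>i<n. r i = 0 \<or> even (r i)" unfolding x_def by (metis even_iff_mod_2_eq_zero)
  then show ?thesis using D(1,2,4) rn by blast
qed

end
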